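(* Let $\mathscr{A}$ be a finite alphabet with more than one letter and let $\mathcal{D}$ be a dictionary over $\mathscr{A}$ with subword complexity function $p(k)=\#(\mathcal{D}\cap\mathscr{A}^k)$. Then for every $k\in\mathbb{N}$, $n_{br}^\pm(k)\leq p(k+1)-p(k)$ and $$\frac{p(k+1)-p(k)}{\#\mathscr{A}-1}\leq n_{br}(k)\leq 2\big(p(k+1)-p(k)\big).$$ Moreover these estimates are optimal.
   Context: A dictionary is a non-empty set $\mathcal{D}$ of finite words over $\mathscr{A}$ containing the empty word, closed under taking subwords, and such that for each $u\in\mathcal{D}$ there are letters $a,b$ with $aub\in\mathcal{D}$. The GAP-graph $\mathscr{G}_k$ has vertex set $\mathcal{D}\cap\mathscr{A}^k$, edge set $\mathcal{D}\cap\mathscr{A}^{k+1}$, the edge $e=a_0\cdots a_k$ going from $\partial_0e=a_0\cdots a_{k-1}$ to $\partial_1e=a_1\cdots a_k$. For a vertex $u$, $\partial^+u$ (resp. $\partial^-u$) is the number of edges $e$ with $\partial_0e=u$ (resp. $\partial_1e=u$). $n_{br}^+(k)$ (resp. $n_{br}^-(k)$) is the number of vertices $u$ of $\mathscr{G}_k$ with $\partial^+u>1$ (resp. $\partial^-u>1$), and $n_{br}(k)$ is the number of vertices $u$ with $\partial^+u>1$ or $\partial^-u>1$. *)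

theory Defs
  imports Complex_Main "HOL-Library.Sublist"
begin

text \<open>Words over the alphabet are lists. "Subword" means contiguous factor
  (library notion sublist).\<close>

definition dictionary :: "'a set \<Rightarrow> 'a list set \<Rightarrow> bool" where
  "dictionary A D \<longleftrightarrow>
     D \<noteq> {} \<and> D \<subseteq> lists A \<and> [] \<in> D \<and>
     (\<forall>w\<in>D. \<forall>u. sublist u w \<longrightarrow> u \<in> D) \<and>
     (\<forall>u\<in>D. \<exists>a\<in>A. \<exists>b\<in>A. [a] @ u @ [b] \<in> D)"

definition complexity :: "'a list set \<Rightarrow> nat \<Rightarrow> nat" where
  "complexity D k = card {w\<in>D. length w = k}"

text \<open>GAP-graph: vertices of G_k are the words of D of length k, edges the words
  of length k+1; the edge e goes from its prefix of length k (take k e) to its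
  suffix of length k (drop 1 e).\<close>
definition out_deg :: "'a list set \<Rightarrow> 'a list \<Rightarrow> nat" where
  "out_deg D u = card {e\<in>D. length e = Suc (length u) \<and> take (length u) e = u}"

definition in_deg :: "'a list set \<Rightarrow> 'a list \<Rightarrow> nat" where
  "in_deg D u = card {e\<in>D. length e = Suc (length u) \<and> drop 1 e = u}"

definition n_br_plus :: "'a list set \<Rightarrow> nat \<Rightarrow> nat" where
  "n_br_plus D k = card {u\<in>D. length u = k \<and> out_deg D u > 1}"

definition n_br_minus :: "'a list set \<Rightarrow> nat \<Rightarrow> nat" where
  "n_br_minus D k = card {u\<in>D. length u = k \<and> in_deg D u > 1}"

definition n_br :: "'a list set \<Rightarrow> nat \<Rightarrow> nat" where
  "n_br D k = card {u\<in>D. length u = k \<and> (out_deg D u > 1 \<or> in_deg D u > 1)}"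

end

theory Submission
  imports Defs
begin

lemma fibre_card:
  assumes "finite E" "finite V" "g ` E \<subseteq> V"
  shows "card E = (\<Sum>u\<in>V. card {e\<in>E. g e = u})"
proof -
  have "E = (\<Union>u\<in>V. {e\<in>E. g e = u})" using assms(3) by auto
  hence "card E = card (\<Union>u\<in>V. {e\<in>E. g e = u})" by simp
  also have "\<dots> = (\<Sum>u\<in>V. card {e\<in>E. g e = u})"
    by (rule card_UN_disjoint) (use assms in auto)
  finally show ?thesis .
qed

lemma deg_bounds:
  fixes f :: "'b \<Rightarrow> nat"
  assumes "finite V" "\<And>u. u \<in> V \<Longrightarrow> 1 \<le> f u" "\<And>u. u \<in> V \<Longrightarrow> f u \<le> c"
  shows "card V \<le> sum f V \<and> card {u\<in>V. f u > 1} \<le> sum f V - card V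
     \<and> sum f V - card V \<le> (c - 1) * card {u\<in>V. f u > 1}"
proof -
  let ?S = "{u\<in>V. f u > 1}"
  have fin: "finite ?S" "finite (V - ?S)" using assms(1) by auto
  have split: "sum f V = sum f ?S + sum f (V - ?S)"
    using assms(1) by (metis (no_types, lifting) mem_Collect_eq subsetI sum.subset_diff add.commute)
  have rest: "sum f (V - ?S) = card (V - ?S)"
  proof -
    have "sum f (V - ?S) = sum (\<lambda>_. 1) (V - ?S)"
      by (rule sum.cong) (use assms(2) in fastforce)+
    thus ?thesis by simp
  qed
  have cV: "card V = card ?S + card (V - ?S)"
    using assms(1) by (metis (no_types, lifting) card_Diff_subset card_mono fin(1) le_add_diff_inverse mem_Collect_eq subsetI)
  have lo: "sum (\<lambda>_. 2) ?S \<le> sum f ?S" by (rule sum_mono) auto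
  have hi: "sum f ?S \<le> sum (\<lambda>_. c) ?S" by (rule sum_mono) (use assms(3) in auto)
  have lo': "2 * card ?S \<le> sum f ?S" using lo by simp
  have hi': "sum f ?S \<le> c * card ?S" using hi by (simp add: mult.commute)
  show ?thesis
    using split rest cV lo' hi' by (auto simp: algebra_simps diff_mult_distrib)
qed

lemma dict_fin:
  assumes "finite A" "dictionary A D"
  shows "finite {w\<in>D. length w = n}"
proof -
  have "{w\<in>D. length w = n} \<subseteq> {xs. set xs \<subseteq> A \<and> length xs = n}"
    using assms(2) unfolding dictionary_def by (auto simp: lists_eq_set)
  thus ?thesis using finite_lists_length_eq[OF assms(1)] finite_subset by blast
qed

lemma dict_sub:
  assumes "dictionary A D" "w \<in> D" "sublist u w"
  shows "u \<in> D"
  using assms unfolding dictionary_def by blast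

lemma out_facts:
  assumes "finite A" "dictionary A D" "u \<in> D"
  shows "1 \<le> out_deg D u \<and> out_deg D u \<le> card A"
proof -
  let ?F = "{e\<in>D. length e = Suc (length u) \<and> take (length u) e = u}"
  have finF: "finite ?F" using dict_fin[OF assms(1,2), of "Suc (length u)"]
    by (rule finite_subset[rotated]) auto
  obtain a b where ab: "a \<in> A" "b \<in> A" "[a] @ u @ [b] \<in> D"
    using assms(2,3) unfolding dictionary_def by blast
  have "u @ [b] \<in> D"
    by (rule dict_sub[OF assms(2) ab(3)]) (use sublist_appendI[of "u@[b]" "[a]" "[]"] in simp)
  hence "u @ [b] \<in> ?F" by simp
  hence "?F \<noteq> {}" by blast
  hence "1 \<le> card ?F" using finF by (simp add: Suc_le_eq card_gt_0_iff)
  moreover have "card ?F \<le> card A"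
  proof (rule card_inj_on_le[where f = "\<lambda>e. e ! length u"])
    show "inj_on (\<lambda>e. e ! length u) ?F"
    proof (rule inj_onI)
      fix x y assume x: "x \<in> ?F" and y: "y \<in> ?F" and eq: "x ! length u = y ! length u"
      have "x = take (length u) x @ [x ! length u]" using x take_Suc_conv_app_nth[of "length u" x]
        by simp
      moreover have "y = take (length u) y @ [y ! length u]" using y take_Suc_conv_app_nth[of "length u" y]
        by simp
      ultimately show "x = y" using x y eq by auto
    qed
    show "(\<lambda>e. e ! length u) ` ?F \<subseteq> A"
    proof
      fix z assume "z \<in> (\<lambda>e. e ! length u) ` ?F"
      then obtain e where e: "e \<in> ?F" "z = e ! length u" by blast
      have "e \<in> lists A" using e assms(2) unfolding dictionary_def by blast
      thus "z \<in> A" using e by (auto simp: lists_eq_set)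
    qed
    show "finite A" by fact
  qed
  ultimately show ?thesis unfolding out_deg_def by simp
qed

lemma in_facts:
  assumes "finite A" "dictionary A D" "u \<in> D"
  shows "1 \<le> in_deg D u \<and> in_deg D u \<le> card A"
proof -
  let ?F = "{e\<in>D. length e = Suc (length u) \<and> drop 1 e = u}"
  have finF: "finite ?F" using dict_fin[OF assms(1,2), of "Suc (length u)"]
    by (rule finite_subset[rotated]) auto
  obtain a b where ab: "a \<in> A" "b \<in> A" "[a] @ u @ [b] \<in> D"
    using assms(2,3) unfolding dictionary_def by blast
  have "[a] @ u \<in> D"
    by (rule dict_sub[OF assms(2) ab(3)]) (use sublist_appendI[of "[a]@u" "[]" "[b]"] in simp)
  hence "[a] @ u \<in> ?F" by simp
  hence "?F \<noteq> {}" by blast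
  hence "1 \<le> card ?F" using finF by (simp add: Suc_le_eq card_gt_0_iff)
  moreover have "card ?F \<le> card A"
  proof (rule card_inj_on_le[where f = "hd"])
    show "inj_on hd ?F"
    proof (rule inj_onI)
      fix x y assume x: "x \<in> ?F" and y: "y \<in> ?F" and eq: "hd x = hd y"
      have "x = hd x # drop 1 x" using x by (cases x) auto
      moreover have "y = hd y # drop 1 y" using y by (cases y) auto
      ultimately show "x = y" using x y eq by auto
    qed
    show "hd ` ?F \<subseteq> A"
    proof
      fix z assume "z \<in> hd ` ?F"
      then obtain e where e: "e \<in> ?F" "z = hd e" by blast
      have "e \<in> lists A" using e assms(2) unfolding dictionary_def by blast
      thus "z \<in> A" using e by (cases e) auto
    qed
    show "finite A" by fact
  qed
  ultimately show ?thesis unfolding in_deg_def by simp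
qed

lemma sum_out:
  assumes "finite A" "dictionary A D"
  shows "complexity D (Suc k) = (\<Sum>u\<in>{w\<in>D. length w = k}. out_deg D u)"
proof -
  have "complexity D (Suc k) = (\<Sum>u\<in>{w\<in>D. length w = k}. card {e\<in>{w\<in>D. length w = Suc k}. take k e = u})"
    unfolding complexity_def
  proof (rule fibre_card)
    show "finite {w \<in> D. length w = Suc k}" "finite {w \<in> D. length w = k}"
      using dict_fin[OF assms] by auto
    show "take k ` {w \<in> D. length w = Suc k} \<subseteq> {w \<in> D. length w = k}"
      using dict_sub[OF assms(2)] prefix_imp_sublist take_is_prefix by fastforce
  qed
  also have "\<dots> = (\<Sum>u\<in>{w\<in>D. length w = k}. out_deg D u)"
    by (rule sum.cong) (auto simp: out_deg_def intro!: arg_cong[where f=card])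
  finally show ?thesis .
qed

lemma sum_in:
  assumes "finite A" "dictionary A D"
  shows "complexity D (Suc k) = (\<Sum>u\<in>{w\<in>D. length w = k}. in_deg D u)"
proof -
  have "complexity D (Suc k) = (\<Sum>u\<in>{w\<in>D. length w = k}. card {e\<in>{w\<in>D. length w = Suc k}. drop 1 e = u})"
    unfolding complexity_def
  proof (rule fibre_card)
    show "finite {w \<in> D. length w = Suc k}" "finite {w \<in> D. length w = k}"
      using dict_fin[OF assms] by auto
    show "drop 1 ` {w \<in> D. length w = Suc k} \<subseteq> {w \<in> D. length w = k}"
      using dict_sub[OF assms(2)] suffix_imp_sublist suffix_drop by fastforce
  qed
  also have "\<dots> = (\<Sum>u\<in>{w\<in>D. length w = k}. in_deg D u)"
    by (rule sum.cong) (auto simp: in_deg_def intro!: arg_cong[where f=card])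
  finally show ?thesis .
qed


lemma part1:
  assumes "finite A" "card A \<ge> 2" "dictionary A D"
  shows "int (n_br_plus D k) \<le> int (complexity D (Suc k)) - int (complexity D k)
            \<and> int (n_br_minus D k) \<le> int (complexity D (Suc k)) - int (complexity D k)
            \<and> (real (complexity D (Suc k)) - real (complexity D k)) / (real (card A) - 1)
                 \<le> real (n_br D k)
            \<and> int (n_br D k) \<le> 2 * (int (complexity D (Suc k)) - int (complexity D k))"
proof -
  let ?V = "{w\<in>D. length w = k}"
  have finV: "finite ?V" using dict_fin[OF assms(1,3)] .
  have bo: "card ?V \<le> sum (out_deg D) ?V \<and> card {u\<in>?V. out_deg D u > 1} \<le> sum (out_deg D) ?V - card ?V
     \<and> sum (out_deg D) ?V - card ?V \<le> (card A - 1) * card {u\<in>?V. out_deg D u > 1}"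
    by (rule deg_bounds[OF finV]) (use out_facts[OF assms(1,3)] in auto)
  have bi: "card ?V \<le> sum (in_deg D) ?V \<and> card {u\<in>?V. in_deg D u > 1} \<le> sum (in_deg D) ?V - card ?V
     \<and> sum (in_deg D) ?V - card ?V \<le> (card A - 1) * card {u\<in>?V. in_deg D u > 1}"
    by (rule deg_bounds[OF finV]) (use in_facts[OF assms(1,3)] in auto)
  have P1: "complexity D (Suc k) = sum (out_deg D) ?V" by (rule sum_out[OF assms(1,3)])
  have P2: "complexity D (Suc k) = sum (in_deg D) ?V" by (rule sum_in[OF assms(1,3)])
  have Pk: "complexity D k = card ?V" unfolding complexity_def ..
  have e1: "n_br_plus D k = card {u\<in>?V. out_deg D u > 1}" unfolding n_br_plus_def
    by (rule arg_cong[where f=card]) auto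
  have e2: "n_br_minus D k = card {u\<in>?V. in_deg D u > 1}" unfolding n_br_minus_def
    by (rule arg_cong[where f=card]) auto
  have e3: "{u\<in>D. length u = k \<and> (out_deg D u > 1 \<or> in_deg D u > 1)}
     = {u\<in>?V. out_deg D u > 1} \<union> {u\<in>?V. in_deg D u > 1}" by auto
  have nle: "n_br D k \<le> n_br_plus D k + n_br_minus D k"
    unfolding n_br_def e3 e1 e2 by (rule card_Un_le)
  have nge: "n_br_plus D k \<le> n_br D k"
    unfolding n_br_def e1 by (rule card_mono) (use finV in \<open>auto intro: finite_subset[rotated]\<close>)
  define d where "d = complexity D (Suc k) - complexity D k"
  have dge: "complexity D k \<le> complexity D (Suc k)" using bo P1 Pk by simp
  have i1: "n_br_plus D k \<le> d" using bo P1 Pk e1 d_def by simp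
  have i2: "n_br_minus D k \<le> d" using bi P2 Pk e2 d_def by simp
  have i3: "d \<le> (card A - 1) * n_br D k"
  proof -
    have "d \<le> (card A - 1) * n_br_plus D k" using bo P1 Pk e1 d_def by simp
    also have "\<dots> \<le> (card A - 1) * n_br D k" using nge by simp
    finally show ?thesis .
  qed
  have r3: "real d \<le> (real (card A) - 1) * real (n_br D k)"
  proof -
    have "real d \<le> real ((card A - 1) * n_br D k)" using i3 by linarith
    thus ?thesis using assms(2) by (simp add: of_nat_diff)
  qed
  have pos: "real (card A) - 1 > 0" using assms(2) by simp
  have rd: "real (complexity D (Suc k)) - real (complexity D k) = real d"
    using dge d_def by (simp add: of_nat_diff)
  have id: "int (complexity D (Suc k)) - int (complexity D k) = int d"
    using dge d_def by simp
  show ?thesis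
    unfolding rd id using i1 i2 nle r3 pos
    by (auto simp: divide_le_eq mult.commute)
qed


lemma lists_dict:
  assumes "B \<subseteq> A" "B \<noteq> {}"
  shows "dictionary A (lists B)"
  unfolding dictionary_def
proof (intro conjI ballI allI impI)
  show "lists B \<noteq> {}" by auto
  show "lists B \<subseteq> lists A" using assms(1) by (rule lists_mono)
  show "[] \<in> lists B" by simp
  fix w u assume "w \<in> lists B" "sublist u w"
  thus "u \<in> lists B" by (auto simp: lists_eq_set dest: set_mono_sublist)
next
  fix u assume u: "u \<in> lists B"
  obtain c where c: "c \<in> B" using assms(2) by blast
  show "\<exists>a\<in>A. \<exists>b\<in>A. [a] @ u @ [b] \<in> lists B"
    using c u assms(1) by auto
qed

lemma lists_counts:
  assumes "finite B"
  shows "complexity (lists B) 0 = 1" "complexity (lists B) 1 = card B"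
    "out_deg (lists B) [] = card B" "in_deg (lists B) [] = card B"
proof -
  have z: "{w\<in>lists B. length w = 0} = {[]}" by auto
  have o: "{w\<in>lists B. length w = 1} = (\<lambda>x. [x]) ` B"
    by (auto simp: length_Suc_conv)
  have ci: "card ((\<lambda>x. [x]) ` B) = card B" by (rule card_image) (auto simp: inj_on_def)
  show "complexity (lists B) 0 = 1" unfolding complexity_def z by simp
  show "complexity (lists B) 1 = card B" unfolding complexity_def o ci ..
  have o1: "{e\<in>lists B. length e = Suc (length []) \<and> take (length []) e = []} = (\<lambda>x. [x]) ` B"
    by (auto simp: length_Suc_conv)
  have o2: "{e\<in>lists B. length e = Suc (length []) \<and> drop 1 e = []} = (\<lambda>x. [x]) ` B"
    by (auto simp: length_Suc_conv)
  show "out_deg (lists B) [] = card B" unfolding out_deg_def o1 ci ..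
  show "in_deg (lists B) [] = card B" unfolding in_deg_def o2 ci ..
qed

lemma lists_nbr:
  assumes "finite B" "card B \<ge> 2"
  shows "n_br_plus (lists B) 0 = 1" "n_br_minus (lists B) 0 = 1" "n_br (lists B) 0 = 1"
proof -
  have "{u\<in>lists B. length u = 0 \<and> out_deg (lists B) u > 1} = {[]}"
    using lists_counts(3)[OF assms(1)] assms(2) by auto
  thus "n_br_plus (lists B) 0 = 1" unfolding n_br_plus_def by simp
  have "{u\<in>lists B. length u = 0 \<and> in_deg (lists B) u > 1} = {[]}"
    using lists_counts(4)[OF assms(1)] assms(2) by auto
  thus "n_br_minus (lists B) 0 = 1" unfolding n_br_minus_def by simp
  have "{u\<in>lists B. length u = 0 \<and> (out_deg (lists B) u > 1 \<or> in_deg (lists B) u > 1)} = {[]}"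
    using lists_counts(3)[OF assms(1)] assms(2) by auto
  thus "n_br (lists B) 0 = 1" unfolding n_br_def by simp
qed


definition D2 :: "'a \<Rightarrow> 'a \<Rightarrow> 'a list set" where
  "D2 a b = {w\<in>lists {a,b}. \<not> sublist [b,a] w}"

lemma D2_dict:
  assumes "a \<in> A" "b \<in> A" "a \<noteq> b"
  shows "dictionary A (D2 a b)"
  unfolding dictionary_def
proof (intro conjI ballI allI impI)
  show "[] \<in> D2 a b" unfolding D2_def by auto
  thus "D2 a b \<noteq> {}" by blast
  show "D2 a b \<subseteq> lists A" unfolding D2_def using assms by auto
  fix w u assume w: "w \<in> D2 a b" and su: "sublist u w"
  have "set u \<subseteq> set w" using su by (rule set_mono_sublist)
  moreover have "\<not> sublist [b,a] u"
  proof
    assume "sublist [b,a] u"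
    hence "sublist [b,a] w" using su by (rule sublist_order.order_trans)
    thus False using w unfolding D2_def by blast
  qed
  ultimately show "u \<in> D2 a b" using w unfolding D2_def by (auto simp: lists_eq_set)
next
  fix u assume u: "u \<in> D2 a b"
  have "\<not> sublist [b,a] (a # (u @ [b]))"
  proof
    assume h: "sublist [b,a] (a # (u @ [b]))"
    have np: "\<not> prefix [b,a] (a # (u @ [b]))" using assms(3) by simp
    from h have "prefix [b,a] (a # (u @ [b])) \<or> sublist [b,a] (u @ [b])"
      by (simp only: sublist_Cons_right)
    hence "sublist [b,a] (u @ [b])" using np by blast
    then obtain ys where ys: "prefix ys (u @ [b])" "suffix [b,a] ys"
      unfolding sublist_altdef by blast
    have "ys = u @ [b] \<or> prefix ys u" using ys(1) by (simp add: prefix_snoc)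
    moreover have "ys \<noteq> u @ [b]"
    proof
      assume "ys = u @ [b]"
      then obtain zs where "u @ [b] = zs @ [b,a]" using ys(2) unfolding suffix_def by blast
      hence "last (u @ [b]) = last (zs @ [b,a])" by simp
      thus False using assms(3) by simp
    qed
    ultimately have "prefix ys u" by blast
    hence "sublist [b,a] u" unfolding sublist_altdef using ys(2) by blast
    thus False using u unfolding D2_def by blast
  qed
  moreover have "set ([a] @ u @ [b]) \<subseteq> {a,b}" using u unfolding D2_def by (auto simp: lists_eq_set)
  ultimately have "[a] @ u @ [b] \<in> D2 a b" unfolding D2_def by (simp add: lists_eq_set)
  thus "\<exists>x\<in>A. \<exists>y\<in>A. [x] @ u @ [y] \<in> D2 a b"
    using assms(1,2) by blast
qed

lemma D2_len1:
  assumes "a \<noteq> b"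
  shows "{w\<in>D2 a b. length w = 1} = {[a],[b]}"
  unfolding D2_def using assms by (auto simp: length_Suc_conv sublist_Cons_right)

lemma D2_len2:
  assumes "a \<noteq> b"
  shows "{w\<in>D2 a b. length w = 2} = {[a,a],[a,b],[b,b]}"
  unfolding D2_def using assms
  by (auto simp: length_Suc_conv numeral_2_eq_2 sublist_Cons_right)


lemma D2_facts:
  assumes "a \<noteq> b"
  shows "complexity (D2 a b) 1 = 2" "complexity (D2 a b) 2 = 3" "n_br (D2 a b) 1 = 2"
proof -
  show "complexity (D2 a b) 1 = 2" unfolding complexity_def D2_len1[OF assms] using assms by simp
  show "complexity (D2 a b) 2 = 3" unfolding complexity_def D2_len2[OF assms] using assms by simp
  have s1: "{e\<in>D2 a b. length e = Suc (length [a]) \<and> take (length [a]) e = [a]} = {[a,a],[a,b]}"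
  proof -
    have "{e\<in>D2 a b. length e = Suc (length [a]) \<and> take (length [a]) e = [a]}
       = {e\<in>{w\<in>D2 a b. length w = 2}. take 1 e = [a]}" by auto
    also have "\<dots> = {[a,a],[a,b]}" unfolding D2_len2[OF assms] using assms by auto
    finally show ?thesis .
  qed
  have s2: "{e\<in>D2 a b. length e = Suc (length [b]) \<and> drop 1 e = [b]} = {[a,b],[b,b]}"
  proof -
    have "{e\<in>D2 a b. length e = Suc (length [b]) \<and> drop 1 e = [b]}
       = {e\<in>{w\<in>D2 a b. length w = 2}. drop 1 e = [b]}" by auto
    also have "\<dots> = {[a,b],[b,b]}" unfolding D2_len2[OF assms] using assms by auto
    finally show ?thesis .
  qed
  have oa: "out_deg (D2 a b) [a] = 2" unfolding out_deg_def s1 using assms by simp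
  have ib: "in_deg (D2 a b) [b] = 2" unfolding in_deg_def s2 using assms by simp
  have "{u\<in>D2 a b. length u = 1 \<and> (out_deg (D2 a b) u > 1 \<or> in_deg (D2 a b) u > 1)}
     = {u\<in>{w\<in>D2 a b. length w = 1}. out_deg (D2 a b) u > 1 \<or> in_deg (D2 a b) u > 1}" by blast
  also have "\<dots> = {[a],[b]}" unfolding D2_len1[OF assms] using oa ib by auto
  finally show "n_br (D2 a b) 1 = 2" unfolding n_br_def using assms by simp
qed

theorem proposition12:
  fixes A :: "'a set" and D :: "'a list set"
  assumes "finite A" and "card A \<ge> 2" and "dictionary A D"
  shows "(\<forall>k. int (n_br_plus D k) \<le> int (complexity D (Suc k)) - int (complexity D k)
            \<and> int (n_br_minus D k) \<le> int (complexity D (Suc k)) - int (complexity D k)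
            \<and> (real (complexity D (Suc k)) - real (complexity D k)) / (real (card A) - 1)
                 \<le> real (n_br D k)
            \<and> int (n_br D k) \<le> 2 * (int (complexity D (Suc k)) - int (complexity D k)))
       \<and> (\<exists>D' k. dictionary A D' \<and> complexity D' k < complexity D' (Suc k) \<and>
            int (n_br_plus D' k) = int (complexity D' (Suc k)) - int (complexity D' k))
       \<and> (\<exists>D' k. dictionary A D' \<and> complexity D' k < complexity D' (Suc k) \<and>
            int (n_br_minus D' k) = int (complexity D' (Suc k)) - int (complexity D' k))
       \<and> (\<exists>D' k. dictionary A D' \<and> complexity D' k < complexity D' (Suc k) \<and>
            (real (complexity D' (Suc k)) - real (complexity D' k)) / (real (card A) - 1)
              = real (n_br D' k))
       \<and> (\<exists>D' k. dictionary A D' \<and> complexity D' k < complexity D' (Suc k) \<and>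
            int (n_br D' k) = 2 * (int (complexity D' (Suc k)) - int (complexity D' k)))"
proof -
  obtain a where a: "a \<in> A" using assms(2) by fastforce
  have "card (A - {a}) \<ge> 1" using assms(1,2) a by simp
  then obtain b where b: "b \<in> A" "b \<noteq> a"
    by (metis Diff_iff card_0_eq finite_Diff assms(1) not_one_le_zero ex_in_conv singletonI)
  have ab: "a \<noteq> b" using b by simp
  have cab: "card {a,b} = 2" using ab by simp
  have dl: "dictionary A (lists {a,b})" by (rule lists_dict) (use a b in auto)
  have dA: "dictionary A (lists A)" by (rule lists_dict) (use a in auto)
  have fab: "finite {a,b}" by simp
  note c2 = lists_counts[OF fab] lists_nbr[OF fab] 
  note cA = lists_counts[OF assms(1)] lists_nbr[OF assms(1,2)]
  have ex1: "\<exists>D' k. dictionary A D' \<and> complexity D' k < complexity D' (Suc k) \<and>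
            int (n_br_plus D' k) = int (complexity D' (Suc k)) - int (complexity D' k)"
    by (rule exI[of _ "lists {a,b}"], rule exI[of _ 0]) (use dl c2 cab in auto)
  have ex2: "\<exists>D' k. dictionary A D' \<and> complexity D' k < complexity D' (Suc k) \<and>
            int (n_br_minus D' k) = int (complexity D' (Suc k)) - int (complexity D' k)"
    by (rule exI[of _ "lists {a,b}"], rule exI[of _ 0]) (use dl c2 cab in auto)
  have ex3: "\<exists>D' k. dictionary A D' \<and> complexity D' k < complexity D' (Suc k) \<and>
            (real (complexity D' (Suc k)) - real (complexity D' k)) / (real (card A) - 1)
              = real (n_br D' k)"
  proof (rule exI[of _ "lists A"], rule exI[of _ 0])
    have "real (card A) - 1 \<noteq> 0" using assms(2) by simp
    thus "dictionary A (lists A) \<and> complexity (lists A) 0 < complexity (lists A) (Suc 0) \<and>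
      (real (complexity (lists A) (Suc 0)) - real (complexity (lists A) 0)) / (real (card A) - 1)
        = real (n_br (lists A) 0)"
      using dA cA assms(2) by simp
  qed
  have ex4: "\<exists>D' k. dictionary A D' \<and> complexity D' k < complexity D' (Suc k) \<and>
            int (n_br D' k) = 2 * (int (complexity D' (Suc k)) - int (complexity D' k))"
  proof (rule exI[of _ "D2 a b"], rule exI[of _ 1])
    have e: "Suc 1 = (2::nat)" by simp
    show "dictionary A (D2 a b) \<and> complexity (D2 a b) 1 < complexity (D2 a b) (Suc 1) \<and>
      int (n_br (D2 a b) 1) = 2 * (int (complexity (D2 a b) (Suc 1)) - int (complexity (D2 a b) 1))"
      unfolding e using D2_dict[OF a b(1) ab] D2_facts[OF ab] by simp
  qed
  show ?thesis using part1[OF assms] ex1 ex2 ex3 ex4 by blast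
qed

end
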